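(* Let $(\mathcal{H},|\cdot|)$ be a separable Hilbert space and let $f=(f_j)_{j=0}^{\infty}$ be an $\mathcal{H}$-valued martingale relative to a filtration $(\mathscr{F}_j)_{j=0}^{\infty}$ on a probability space $(\Omega,\mathscr{F},\mathbb{P})$. Suppose there is a nonnegative predictable sequence $w=(w_j)_{j=1}^{\infty}$ (i.e. $w_j$ is $\mathscr{F}_{j-1}$-measurable) such that $|f_j-f_{j-1}|\le w_j$ almost surely for every $j\in\mathbb{N}$. Then for every $b\ge \big\|\sum_{j=1}^{\infty}w_j^2\big\|_{\infty}$ and every $r>0$, $$\mathbb{P}\{f^*\ge r\}\le 2\exp\Big\{-\frac{r^2}{2b}\Big\},$$ where $f^*=\sup_{j\in\mathbb{N}}|f_j-f_0|$.
   Context: $\|\cdot\|_\infty$ denotes the $L^\infty(\mathbb{P})$-norm (essential supremum). Martingales are sequences of Bochner-integrable random variables adapted to the filtration with $\mathbb{E}(f_j\mid\mathscr{F}_s)=f_s$ for $s\le j$. Standing convention: $\mathscr{F}_0$ is the trivial $\sigma$-algebra. *)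

theory Defs
  imports "HOL-Probability.Probability"
begin

definition nat_filtration :: "'a measure \<Rightarrow> (nat \<Rightarrow> 'a measure) \<Rightarrow> bool" where
  "nat_filtration M F \<longleftrightarrow> (\<forall>j. subalgebra M (F j)) \<and> filtration (space M) F"

text \<open>Martingale with values in a Banach space: adapted, Bochner integrable, and
  E(f_j | F_s) = f_s for s \<le> j, written out via the defining property of
  conditional expectation (equal set integrals over every A in F_s).\<close>
definition bmartingale :: "'a measure \<Rightarrow> (nat \<Rightarrow> 'a measure) \<Rightarrow>
    (nat \<Rightarrow> 'a \<Rightarrow> 'h::{banach, second_countable_topology}) \<Rightarrow> bool" where
  "bmartingale M F f \<longleftrightarrow>
     (\<forall>j. f j \<in> borel_measurable (F j) \<and> integrable M (f j)) \<and>
     (\<forall>s j A. s \<le> j \<longrightarrow> A \<in> sets (F s) \<longrightarrow>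
        (LINT x:A|M. f j x) = (LINT x:A|M. f s x))"

end

theory Submission
  imports Defs
begin


lemma orth_lemma:
  fixes V D :: "'a \<Rightarrow> 'h::{real_inner,banach,second_countable_topology}"
  assumes sub: "subalgebra M N" and V: "V \<in> borel_measurable N"
    and bnd: "\<And>x. x \<in> space M \<Longrightarrow> norm (V x) \<le> C"
    and D: "integrable M D" and Z: "\<And>B. B \<in> sets N \<Longrightarrow> (\<integral>x. indicator B x *\<^sub>R D x \<partial>M) = 0"
  shows "(\<integral>x. V x \<bullet> D x \<partial>M) = 0"
proof -
  have sp: "space N = space M" using sub by (simp add: subalgebra_def)
  obtain S where S: "\<And>i. simple_function N (S i)" 
    and lim: "\<And>x. x \<in> space N \<Longrightarrow> (\<lambda>i. S i x) \<longlonglongrightarrow> V x"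
    and Sb: "\<And>i x. x \<in> space N \<Longrightarrow> dist (S i x) 0 \<le> 2 * dist (V x) 0"
    using borel_measurable_implies_sequence_metric[OF V, of 0] by blast
  have VM: "V \<in> borel_measurable M" using measurable_from_subalg[OF sub V] .
  have SM: "S i \<in> borel_measurable M" for i
    using measurable_from_subalg[OF sub borel_measurable_simple_function[OF S]] .
  have DM: "D \<in> borel_measurable M" using D by auto
  have zero: "(\<integral>x. S i x \<bullet> D x \<partial>M) = 0" for i
  proof -
    let ?R = "S i ` space N"
    have fin: "finite ?R" using simple_functionD(1)[OF S[of i]] .
    have setsv: "S i -` {v} \<inter> space N \<in> sets N" for v
      using simple_functionD(2)[OF S[of i]] by blast
    have "(\<integral>x. S i x \<bullet> D x \<partial>M) = (\<integral>x. (\<Sum>v\<in>?R. v \<bullet> (indicator (S i -` {v} \<inter> space N) x *\<^sub>R D x)) \<partial>M)"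
    proof (rule Bochner_Integration.integral_cong[OF refl])
      fix x assume x: "x \<in> space M"
      have "(\<Sum>v\<in>?R. v \<bullet> (indicator (S i -` {v} \<inter> space N) x *\<^sub>R D x))
          = (\<Sum>v\<in>?R. if v = S i x then v \<bullet> D x else 0)"
        using x sp by (intro sum.cong) (auto simp: indicator_def)
      also have "\<dots> = S i x \<bullet> D x" using fin x sp by (simp add: sum.delta')
      finally show "S i x \<bullet> D x = (\<Sum>v\<in>?R. v \<bullet> (indicator (S i -` {v} \<inter> space N) x *\<^sub>R D x))" by simp
    qed
    also have "\<dots> = (\<Sum>v\<in>?R. (\<integral>x. v \<bullet> (indicator (S i -` {v} \<inter> space N) x *\<^sub>R D x) \<partial>M))"
    proof (rule Bochner_Integration.integral_sum)
      fix v assume "v \<in> ?R"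
      have "S i -` {v} \<inter> space N \<in> sets M" using setsv[of v] sub by (auto simp: subalgebra_def)
      then have "integrable M (\<lambda>x. indicator (S i -` {v} \<inter> space N) x *\<^sub>R D x)"
        using integrable_mult_indicator[OF _ D] by blast
      then show "integrable M (\<lambda>x. v \<bullet> (indicator (S i -` {v} \<inter> space N) x *\<^sub>R D x))"
        by (rule integrable_inner_right)
    qed
    also have "\<dots> = (\<Sum>v\<in>?R. v \<bullet> (\<integral>x. indicator (S i -` {v} \<inter> space N) x *\<^sub>R D x \<partial>M))"
    proof (intro sum.cong refl integral_inner_right)
      fix v
      have "S i -` {v} \<inter> space N \<in> sets M" using setsv[of v] sub by (auto simp: subalgebra_def)
      then show "integrable M (\<lambda>x. indicator (S i -` {v} \<inter> space N) x *\<^sub>R D x)"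
        using integrable_mult_indicator[OF _ D] by blast
    qed
    also have "\<dots> = 0"
      using Z[OF setsv] by simp
    finally show ?thesis .
  qed
  have "(\<lambda>i. (\<integral>x. S i x \<bullet> D x \<partial>M)) \<longlonglongrightarrow> (\<integral>x. V x \<bullet> D x \<partial>M)"
  proof (rule integral_dominated_convergence[where w="\<lambda>x. 2 * C * norm (D x)"])
    show "(\<lambda>x. V x \<bullet> D x) \<in> borel_measurable M" using VM DM by measurable
    show "(\<lambda>x. S i x \<bullet> D x) \<in> borel_measurable M" for i using SM DM by measurable
    show "integrable M (\<lambda>x. 2 * C * norm (D x))" using D by auto
    show "AE x in M. (\<lambda>i. S i x \<bullet> D x) \<longlonglongrightarrow> V x \<bullet> D x"
      using lim sp by (auto intro!: tendsto_inner)
    show "AE x in M. norm (S i x \<bullet> D x) \<le> 2 * C * norm (D x)" for i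
    proof (rule AE_I2)
      fix x assume x: "x \<in> space M"
      have "norm (S i x \<bullet> D x) \<le> norm (S i x) * norm (D x)"
        using Cauchy_Schwarz_ineq2 by simp
      also have "\<dots> \<le> 2 * C * norm (D x)"
        using Sb[of x i] bnd[OF x] x sp by (auto intro!: mult_right_mono)
      finally show "norm (S i x \<bullet> D x) \<le> 2 * C * norm (D x)" .
    qed
  qed
  then show ?thesis using zero by (simp add: LIMSEQ_const_iff)
qed


lemma cosh_mono_nonneg: "0 \<le> (x::real) \<Longrightarrow> x \<le> y \<Longrightarrow> cosh x \<le> cosh y"
  using cosh_real_strict_mono[of x y] by (cases "x = y") auto

lemma sinh_le_u_cosh: "0 \<le> (u::real) \<Longrightarrow> sinh u \<le> u * cosh u"
proof -
  assume u: "0 \<le> u"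
  have "(\<lambda>t. t * cosh t - sinh t) 0 \<le> (\<lambda>t. t * cosh t - sinh t) u"
  proof (rule DERIV_nonneg_imp_nondecreasing[OF u])
    fix t :: real assume "0 \<le> t" "t \<le> u" then have t: "0 \<le> t \<and> t \<le> u" by auto
    show "\<exists>y. ((\<lambda>t. t * cosh t - sinh t) has_real_derivative y) (at t) \<and> 0 \<le> y"
      by (rule exI[of _ "t * sinh t"]) (use t in \<open>auto intro!: derivative_eq_intros\<close>)
  qed
  then show ?thesis by simp
qed

lemma ln_cosh_le: "ln (cosh (u::real)) \<le> u\<^sup>2 / 2"
proof -
  have *: "ln (cosh v) \<le> v\<^sup>2 / 2" if v: "0 \<le> v" for v :: real
  proof -
    have "(\<lambda>t. t\<^sup>2/2 - ln (cosh t)) 0 \<le> (\<lambda>t. t\<^sup>2/2 - ln (cosh t)) v"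
    proof (rule DERIV_nonneg_imp_nondecreasing[OF v])
      fix t :: real assume "0 \<le> t" "t \<le> v" then have t: "0 \<le> t \<and> t \<le> v" by auto
      have "sinh t \<le> t * cosh t" using sinh_le_u_cosh t by auto
      then have "0 \<le> t - sinh t / cosh t" by (simp add: field_simps)
      then show "\<exists>y. ((\<lambda>t. t\<^sup>2/2 - ln (cosh t)) has_real_derivative y) (at t) \<and> 0 \<le> y"
        by (intro exI[of _ "t - sinh t / cosh t"]) (auto intro!: derivative_eq_intros)
    qed
    then show ?thesis by simp
  qed
  show ?thesis using *[of "\<bar>u\<bar>"] by simp
qed

lemma cosh_le_exp_sq: "cosh (u::real) \<le> exp (u\<^sup>2 / 2)"
  using ln_cosh_le[of u] by (metis cosh_real_pos exp_le_cancel_iff exp_ln)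

lemma sinh_div_mono: "0 < (x::real) \<Longrightarrow> x \<le> y \<Longrightarrow> sinh x / x \<le> sinh y / y"
proof -
  assume x: "0 < x" and xy: "x \<le> y"
  show ?thesis
  proof (rule DERIV_nonneg_imp_nondecreasing[OF xy, of "\<lambda>t. sinh t / t"])
    fix t :: real assume "x \<le> t" "t \<le> y" then have t: "x \<le> t \<and> t \<le> y" by auto
    then have tp: "0 < t" using x by auto
    have "sinh t \<le> t * cosh t" using sinh_le_u_cosh tp by auto
    then have "0 \<le> (cosh t * t - sinh t) / t\<^sup>2" using tp by (auto simp: algebra_simps)
    moreover have "((\<lambda>t. sinh t / t) has_real_derivative (cosh t * t - sinh t) / t\<^sup>2) (at t)"
      using tp by (auto intro!: derivative_eq_intros simp: power2_eq_square field_simps)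
    ultimately show "\<exists>y. ((\<lambda>t. sinh t / t) has_real_derivative y) (at t) \<and> 0 \<le> y" by blast
  qed
qed

lemma conv_pos: "0 < (l::real) \<Longrightarrow> convex_on {0<..} (\<lambda>z. cosh (l * sqrt z))"
proof -
  assume l: "0 < l"
  show ?thesis
  proof (rule convex_on_realI[where f'="\<lambda>z. l * (sinh (l * sqrt z) / (l * sqrt z)) * l / 2"])
    show "connected {0::real<..}" by simp
    fix z :: real assume z: "z \<in> {0<..}"
    then show "((\<lambda>z. cosh (l * sqrt z)) has_real_derivative l * (sinh (l * sqrt z) / (l * sqrt z)) * l / 2) (at z)"
      using l by (auto intro!: derivative_eq_intros simp: field_simps)
  next
    fix x y :: real assume "x \<in> {0<..}" "y \<in> {0<..}" "x \<le> y"
    then have "sinh (l * sqrt x) / (l * sqrt x) \<le> sinh (l * sqrt y) / (l * sqrt y)"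
      using l by (intro sinh_div_mono) auto
    then show "l * (sinh (l * sqrt x) / (l * sqrt x)) * l / 2 \<le> l * (sinh (l * sqrt y) / (l * sqrt y)) * l / 2"
      using l by (intro divide_right_mono mult_right_mono mult_left_mono) auto
  qed
qed

lemma conv_nonneg: "0 < (l::real) \<Longrightarrow> convex_on {0..} (\<lambda>z. cosh (l * sqrt z))"
proof -
  assume l: "0 < l"
  define \<Phi> where "\<Phi> = (\<lambda>z. cosh (l * sqrt z))"
  have cont: "continuous_on UNIV \<Phi>" unfolding \<Phi>_def by (intro continuous_intros)
  have cp: "convex_on {0<..} \<Phi>" using conv_pos[OF l] unfolding \<Phi>_def .
  have "convex_on {0..} \<Phi>"
  proof (rule convex_on_linorderI)
    show "convex {0::real..}" by simp
    fix t x y :: real assume t: "0 < t" "t < 1" and xy: "x \<in> {0..}" "y \<in> {0..}" "x < y"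
    have "\<Phi> ((1 - t) * x + t * y) \<le> (1 - t) * \<Phi> x + t * \<Phi> y"
    proof (cases "x = 0")
      case False
      then show ?thesis using convex_onD[OF cp, of t x y] t xy by auto
    next
      case True
      have ev: "\<forall>\<^sub>F d in at_right 0. \<Phi> ((1 - t) * d + t * y) \<le> (1 - t) * \<Phi> d + t * \<Phi> y"
        using eventually_at_right_less[of 0]
      proof (rule eventually_mono)
        fix d :: real assume "0 < d"
        then show "\<Phi> ((1 - t) * d + t * y) \<le> (1 - t) * \<Phi> d + t * \<Phi> y"
          using convex_onD[OF cp, of t d y] t xy by auto
      qed
      have l1: "((\<lambda>d. \<Phi> ((1 - t) * d + t * y)) \<longlongrightarrow> \<Phi> ((1 - t) * 0 + t * y)) (at_right 0)"
        by (intro continuous_on_tendsto_compose[OF cont] tendsto_intros) auto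
      have l2: "((\<lambda>d. (1 - t) * \<Phi> d + t * \<Phi> y) \<longlongrightarrow> (1 - t) * \<Phi> 0 + t * \<Phi> y) (at_right 0)"
        by (intro continuous_on_tendsto_compose[OF cont] tendsto_intros) auto
      show ?thesis using tendsto_le[OF trivial_limit_at_right_real l2 l1 ev] True by simp
    qed
    then show "\<Phi> ((1 - t) *\<^sub>R x + t *\<^sub>R y) \<le> (1 - t) * \<Phi> x + t * \<Phi> y" by simp
  qed
  then show ?thesis unfolding \<Phi>_def .
qed



definition kap :: "real \<Rightarrow> real \<Rightarrow> real \<Rightarrow> real" where
  "kap l a w = (if a = 0 \<or> w = 0 then 0 else sinh (l * a) * sinh (l * w) / (a * w))"

lemma key_ineq:
  fixes x d :: "'h::real_inner"
  assumes dw: "norm d \<le> w" and l: "0 < l"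
  shows "cosh (l * norm (x + d)) \<le> cosh (l * norm x) * cosh (l * w) + kap l (norm x) w * (x \<bullet> d)"
proof -
  define a where "a = norm x"
  have w0: "0 \<le> w" using dw norm_ge_zero order_trans by blast
  consider "w = 0" | "a = 0" | "0 < a" "0 < w" using w0 a_def by fastforce
  then show ?thesis
  proof cases
    case 1
    then have "d = 0" using dw by simp
    then show ?thesis using 1 by (simp add: kap_def)
  next
    case 2
    then have "x = 0" using a_def by simp
    then show ?thesis using 2 dw l a_def by (auto simp: kap_def intro!: cosh_mono_nonneg)
  next
    case 3
    define p where "p = x \<bullet> d"
    have pb: "\<bar>p\<bar> \<le> a * w"
    proof -
      have "\<bar>p\<bar> \<le> norm x * norm d" unfolding p_def by (rule Cauchy_Schwarz_ineq2)
      also have "\<dots> \<le> a * w" using dw a_def by (auto intro!: mult_left_mono)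
      finally show ?thesis .
    qed
    have nsq: "(norm (x + d))\<^sup>2 = a\<^sup>2 + 2 * p + (norm d)\<^sup>2"
      unfolding a_def p_def power2_norm_eq_inner by (simp add: inner_add inner_commute)
    define z where "z = a\<^sup>2 + w\<^sup>2 + 2 * p"
    have "(norm (x + d))\<^sup>2 \<le> z" unfolding nsq z_def using dw by (auto intro!: power_mono)
    then have "norm (x + d) \<le> sqrt z" by (simp add: real_le_rsqrt)
    then have step1: "cosh (l * norm (x + d)) \<le> cosh (l * sqrt z)"
      using l by (intro cosh_mono_nonneg) auto
    define \<theta> where "\<theta> = (1 + p / (a * w)) / 2"
    have th: "0 \<le> \<theta>" "\<theta> \<le> 1" using pb 3 unfolding \<theta>_def by (auto simp: field_simps abs_le_iff)
    have zc: "z = (1 - \<theta>) * (a - w)\<^sup>2 + \<theta> * (a + w)\<^sup>2"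
      using 3 unfolding z_def \<theta>_def by (simp add: field_simps power2_eq_square)
    have "cosh (l * sqrt z) \<le> (1 - \<theta>) * cosh (l * sqrt ((a - w)\<^sup>2)) + \<theta> * cosh (l * sqrt ((a + w)\<^sup>2))"
      using convex_onD[OF conv_nonneg[OF l], of \<theta> "(a - w)\<^sup>2" "(a + w)\<^sup>2"] th zc by simp
    also have "cosh (l * sqrt ((a - w)\<^sup>2)) = cosh (l * a - l * w)"
    proof -
      have "l * sqrt ((a - w)\<^sup>2) = \<bar>l * a - l * w\<bar>" using l by (simp add: abs_mult flip: right_diff_distrib)
      then show ?thesis by (metis cosh_real_abs)
    qed
    also have "cosh (l * sqrt ((a + w)\<^sup>2)) = cosh (l * a + l * w)"
      using 3 l by (simp add: distrib_left)
    also have "(1 - \<theta>) * cosh (l * a - l * w) + \<theta> * cosh (l * a + l * w)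
        = cosh (l * a) * cosh (l * w) + kap l a w * p"
      using 3 unfolding cosh_add cosh_diff kap_def \<theta>_def by (simp add: field_simps)
    finally show ?thesis using step1 unfolding a_def p_def by simp
  qed
qed



lemma maximal_ineq:
  fixes G :: "nat \<Rightarrow> 'a \<Rightarrow> real"
  assumes P: "prob_space M"
    and subs: "\<And>k. sets (F k) \<subseteq> sets M" and sps: "\<And>k. space (F k) = space M"
    and meas: "\<And>i k. i \<le> k \<Longrightarrow> G i \<in> borel_measurable (F k)"
    and int: "\<And>k. integrable M (G k)"
    and nn: "\<And>k x. x \<in> space M \<Longrightarrow> 0 \<le> G k x"
    and sup: "\<And>m A. A \<in> sets (F m) \<Longrightarrow>
       (\<integral>x. indicator A x * G (Suc m) x \<partial>M) \<le> (\<integral>x. indicator A x * G m x \<partial>M)"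
    and c: "0 < c"
  shows "c * measure M {x\<in>space M. \<exists>k\<le>n. c \<le> G k x} \<le> (\<integral>x. G 0 x \<partial>M)"
proof -
  interpret prob_space M by fact
  define B where "B n = {x\<in>space M. \<forall>i<n. G i x < c}" for n
  have BF: "B (Suc m) \<in> sets (F m)" for m
  proof -
    have "B (Suc m) = (\<Inter>i\<in>{..m}. {x\<in>space (F m). G i x < c})"
      unfolding B_def sps by auto
    also have "\<dots> \<in> sets (F m)"
    proof (rule sets.finite_INT)
      fix i assume "i \<in> {..m}"
      then have [measurable]: "G i \<in> borel_measurable (F m)" using meas by auto
      show "{x\<in>space (F m). G i x < c} \<in> sets (F m)" by measurable
    qed auto
    finally show ?thesis .
  qed
  have BM: "B (Suc m) \<in> sets M" for m using BF subs by blast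
  have GM: "G k \<in> borel_measurable M" for k using int by auto
  have intA: "integrable M (\<lambda>x. indicator A x * G k x)" if "A \<in> sets M" for A k
    using integrable_mult_indicator[OF that int[of k]] by simp
  have lowb: "c * measure M A \<le> (\<integral>x. indicator A x * G k x \<partial>M)"
    if A: "A \<in> sets M" and ge: "\<And>x. x \<in> A \<Longrightarrow> c \<le> G k x" for A k
  proof -
    have iA: "integrable M (indicator A :: 'a \<Rightarrow> real)" using A by (intro integrable_real_indicator) (auto simp: less_top[symmetric])
    then have "c * measure M A = (\<integral>x. c * indicator A x \<partial>M)" using A by simp
    also have "\<dots> \<le> (\<integral>x. indicator A x * G k x \<partial>M)"
      using A ge by (intro integral_mono intA integrable_mult_right iA) (auto simp: indicator_def)
    finally show ?thesis .
  qed
  have split: "(\<integral>x. indicator A x * G k x \<partial>M) = (\<integral>x. indicator (A - C) x * G k x \<partial>M) + (\<integral>x. indicator C x * G k x \<partial>M)"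
    if "A \<in> sets M" "C \<in> sets M" "C \<subseteq> A" for A C k
  proof -
    have "(\<integral>x. indicator A x * G k x \<partial>M) = (\<integral>x. indicator (A - C) x * G k x + indicator C x * G k x \<partial>M)"
      using that by (intro Bochner_Integration.integral_cong) (auto simp: indicator_def)
    also have "\<dots> = (\<integral>x. indicator (A - C) x * G k x \<partial>M) + (\<integral>x. indicator C x * G k x \<partial>M)"
      using that by (intro Bochner_Integration.integral_add intA) auto
    finally show ?thesis .
  qed
  have inv: "c * measure M (space M - B (Suc n)) + (\<integral>x. indicator (B (Suc n)) x * G n x \<partial>M) \<le> (\<integral>x. G 0 x \<partial>M)" for n
  proof (induction n)
    case 0
    have "(\<integral>x. G 0 x \<partial>M) = (\<integral>x. indicator (space M) x * G 0 x \<partial>M)"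
      by (intro Bochner_Integration.integral_cong) (auto simp: indicator_def)
    also have "\<dots> = (\<integral>x. indicator (space M - B 1) x * G 0 x \<partial>M) + (\<integral>x. indicator (B 1) x * G 0 x \<partial>M)"
      using BM[of 0] by (intro split) (auto simp: B_def)
    finally have eq: "(\<integral>x. G 0 x \<partial>M) = (\<integral>x. indicator (space M - B 1) x * G 0 x \<partial>M) + (\<integral>x. indicator (B 1) x * G 0 x \<partial>M)" .
    have "c * measure M (space M - B 1) \<le> (\<integral>x. indicator (space M - B 1) x * G 0 x \<partial>M)"
      using BM[of 0] by (intro lowb) (auto simp: B_def)
    then show ?case using eq by simp
  next
    case (Suc n)
    have sub: "B (Suc (Suc n)) \<subseteq> B (Suc n)" unfolding B_def by auto
    have "measure M (space M - B (Suc (Suc n))) = measure M (space M - B (Suc n)) + measure M (B (Suc n) - B (Suc (Suc n)))"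
    proof -
      have "space M - B (Suc (Suc n)) = (space M - B (Suc n)) \<union> (B (Suc n) - B (Suc (Suc n)))"
        using sub unfolding B_def by auto
      then have "measure M (space M - B (Suc (Suc n))) = measure M ((space M - B (Suc n)) \<union> (B (Suc n) - B (Suc (Suc n))))"
        by simp
      also have "\<dots> = measure M (space M - B (Suc n)) + measure M (B (Suc n) - B (Suc (Suc n)))"
        by (rule finite_measure_Union) (use BM[of n] BM[of "Suc n"] in auto)
      finally show ?thesis .
    qed
    moreover have "(\<integral>x. indicator (B (Suc (Suc n))) x * G (Suc n) x \<partial>M) + c * measure M (B (Suc n) - B (Suc (Suc n)))
        \<le> (\<integral>x. indicator (B (Suc n)) x * G n x \<partial>M)"
    proof -
      have "c * measure M (B (Suc n) - B (Suc (Suc n))) \<le> (\<integral>x. indicator (B (Suc n) - B (Suc (Suc n))) x * G (Suc n) x \<partial>M)"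
      proof (rule lowb)
        show "B (Suc n) - B (Suc (Suc n)) \<in> sets M" using BM[of n] BM[of "Suc n"] by auto
        fix x assume "x \<in> B (Suc n) - B (Suc (Suc n))"
        then have "\<forall>i<Suc n. G i x < c" "\<not> (\<forall>i<Suc (Suc n). G i x < c)" by (auto simp: B_def)
        then show "c \<le> G (Suc n) x" by (metis less_Suc_eq not_less)
      qed
      moreover have "(\<integral>x. indicator (B (Suc n)) x * G (Suc n) x \<partial>M) = (\<integral>x. indicator (B (Suc n) - B (Suc (Suc n))) x * G (Suc n) x \<partial>M) + (\<integral>x. indicator (B (Suc (Suc n))) x * G (Suc n) x \<partial>M)"
        using BM[of n] BM[of "Suc n"] sub by (intro split) auto
      moreover have "(\<integral>x. indicator (B (Suc n)) x * G (Suc n) x \<partial>M) \<le> (\<integral>x. indicator (B (Suc n)) x * G n x \<partial>M)"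
        using sup[OF BF[of n]] .
      ultimately show ?thesis by linarith
    qed
    ultimately show ?case using Suc.IH by (simp add: distrib_left)
  qed
  have "{x\<in>space M. \<exists>k\<le>n. c \<le> G k x} = space M - B (Suc n)"
    unfolding B_def less_Suc_eq_le by (auto simp: not_less)
  moreover have "0 \<le> (\<integral>x. indicator (B (Suc n)) x * G n x \<partial>M)"
    using nn by (intro integral_nonneg_AE AE_I2) (auto simp: indicator_def)
  ultimately show ?thesis using inv[of n] by simp
qed



lemma Vbound:
  assumes l: "0 < l" and a: "0 \<le> a" and W: "0 \<le> W" and Q: "1 \<le> Q" and aR: "a \<le> R"
  shows "\<bar>kap l a W / (Q * cosh (l * W))\<bar> * a \<le> l * sinh (l * R)"
proof (cases "a = 0 \<or> W = 0")
  case True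
  then show ?thesis using l a aR by (auto simp: kap_def)
next
  case False
  then have ap: "0 < a" and Wp: "0 < W" using a W by auto
  have sW: "sinh (l * W) \<le> l * W * cosh (l * W)" using sinh_le_u_cosh[of "l * W"] l W by simp
  have sa: "0 \<le> sinh (l * a)" using l a by simp
  have "\<bar>kap l a W / (Q * cosh (l * W))\<bar> * a = sinh (l * a) * (sinh (l * W) / (W * Q * cosh (l * W)))"
    using ap Wp l Q by (simp add: kap_def abs_mult field_simps)
  also have "\<dots> \<le> sinh (l * a) * l"
  proof (rule mult_left_mono[OF _ sa])
    have "sinh (l * W) \<le> l * (W * Q * cosh (l * W))"
      using sW Q Wp l by (smt (verit) cosh_real_pos mult_le_cancel_left1 mult_pos_pos mult.assoc mult.commute)
    then show "sinh (l * W) / (W * Q * cosh (l * W)) \<le> l"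
      using Wp Q by (simp add: divide_le_eq)
  qed
  also have "\<dots> \<le> l * sinh (l * R)"
  proof -
    have "sinh (l * a) \<le> sinh (l * R)" using aR l by (simp add: mult_left_mono strict_mono_less_eq[OF sinh_real_strict_mono])
    then show ?thesis using l by (simp add: mult.commute)
  qed
  finally show ?thesis .
qed

lemma meas_mono:
  assumes "nat_filtration M F" "i \<le> j" "h \<in> measurable (F i) N"
  shows "h \<in> measurable (F j) N"
proof -
  have "filtration (space M) F" "\<And>k. subalgebra M (F k)" using assms(1) by (auto simp: nat_filtration_def)
  then have "subalgebra (F j) (F i)"
    using filtration.sets_F_mono[of "space M" F i j] assms(2) filtration.space_F
    by (simp add: subalgebra_def)
  then show ?thesis using measurable_from_subalg assms(3) by blast
qed



lemma cosh_borel[measurable]: "(cosh :: real \<Rightarrow> real) \<in> borel_measurable borel"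
  by (intro borel_measurable_continuous_onI continuous_intros)

lemma sinh_borel[measurable]: "(sinh :: real \<Rightarrow> real) \<in> borel_measurable borel"
  by (intro borel_measurable_continuous_onI continuous_intros)

lemma main_s:
  fixes M :: "'a measure" and F :: "nat \<Rightarrow> 'a measure"
    and f :: "nat \<Rightarrow> 'a \<Rightarrow> 'h::{real_inner, banach, second_countable_topology}"
    and w :: "nat \<Rightarrow> 'a \<Rightarrow> real" and b s :: real
  assumes P: "prob_space M"
    and NF: "nat_filtration M F"
    and BMa: "bmartingale M F f"
    and wm: "\<And>j. j \<ge> 1 \<Longrightarrow> w j \<in> borel_measurable (F (j - 1))"
    and wnn: "\<And>j x. j \<ge> 1 \<Longrightarrow> x \<in> space M \<Longrightarrow> w j x \<ge> 0"
    and dw: "\<And>j. j \<ge> 1 \<Longrightarrow> AE x in M. norm (f j x - f (j - 1) x) \<le> w j x"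
    and es: "ereal b \<ge> esssup M (\<lambda>x. \<Sum>j. ereal ((w (Suc j) x)\<^sup>2))"
    and b: "0 < b" and s: "0 < s"
  shows "measure M {x\<in>space M. \<exists>k. s < norm (f k x - f 0 x)} \<le> 2 * exp (- (s\<^sup>2 / (2 * b)))"
proof -
  interpret prob_space M by fact
  have subF: "subalgebra M (F j)" for j using NF by (simp add: nat_filtration_def)
  have spF: "space (F j) = space M" for j using subF[of j] by (simp add: subalgebra_def)
  have setsF: "sets (F j) \<subseteq> sets M" for j using subF[of j] by (simp add: subalgebra_def)
  have fF: "f j \<in> borel_measurable (F j)" and fint: "integrable M (f j)" for j
    using BMa by (auto simp: bmartingale_def)
  have fM[measurable]: "f j \<in> borel_measurable M" for j using fint by auto
  have fFk: "f j \<in> borel_measurable (F k)" if "j \<le> k" for j k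
    using meas_mono[OF NF that fF] .
  have wF: "w (Suc i) \<in> borel_measurable (F k)" if "i < k" for i k
    using meas_mono[OF NF _ wm[of "Suc i"]] that by auto
  have wM[measurable]: "w (Suc i) \<in> borel_measurable M" for i
    using measurable_from_subalg[OF subF wF[of i "Suc i"]] by simp
  have mart: "(\<integral>x. indicator B x *\<^sub>R (f (Suc m) x - f m x) \<partial>M) = 0" if B: "B \<in> sets (F m)" for B m
  proof -
    have BM: "B \<in> sets M" using B setsF by blast
    have "(LINT x:B|M. f (Suc m) x) = (LINT x:B|M. f m x)"
      using BMa B by (auto simp: bmartingale_def)
    then have "(\<integral>x. indicator B x *\<^sub>R f (Suc m) x \<partial>M) - (\<integral>x. indicator B x *\<^sub>R f m x \<partial>M) = 0"
      by (simp add: set_lebesgue_integral_def)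
    moreover have "(\<integral>x. indicator B x *\<^sub>R (f (Suc m) x - f m x) \<partial>M) = (\<integral>x. indicator B x *\<^sub>R f (Suc m) x \<partial>M) - (\<integral>x. indicator B x *\<^sub>R f m x \<partial>M)"
      unfolding scaleR_right_diff_distrib
      by (intro Bochner_Integration.integral_diff integrable_mult_indicator[OF BM] fint)
    ultimately show ?thesis by simp
  qed

  define good where "good x \<longleftrightarrow> (\<forall>j\<ge>1. norm (f j x - f (j - 1) x) \<le> w j x) \<and> (\<forall>n. (\<Sum>i<n. (w (Suc i) x)\<^sup>2) \<le> b)" for x
  have AEgood: "AE x in M. good x"
  proof -
    have A1: "AE x in M. \<forall>j. 1 \<le> j \<longrightarrow> norm (f j x - f (j - 1) x) \<le> w j x"
      unfolding AE_all_countable using dw by (auto intro: AE_I2)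
    have A2: "AE x in M. (\<Sum>j. ereal ((w (Suc j) x)\<^sup>2)) \<le> ereal b"
      using esssup_AE[of "\<lambda>x. \<Sum>j. ereal ((w (Suc j) x)\<^sup>2)" M] es
      by (auto elim: eventually_mono)
    from A1 A2 show ?thesis
    proof eventually_elim
      case (elim x)
      have "(\<Sum>i<n. (w (Suc i) x)\<^sup>2) \<le> b" for n
      proof -
        have "ereal (\<Sum>i<n. (w (Suc i) x)\<^sup>2) = (\<Sum>i<n. ereal ((w (Suc i) x)\<^sup>2))" by simp
        also have "\<dots> \<le> (\<Sum>j. ereal ((w (Suc j) x)\<^sup>2))" by (rule suminf_upper) simp
        also have "\<dots> \<le> ereal b" using elim by simp
        finally show ?thesis by simp
      qed
      then show ?case using elim unfolding good_def by auto
    qed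
  qed
  have wle: "w (Suc i) x \<le> sqrt b" if "good x" "x \<in> space M" for i x
  proof -
    have "(w (Suc i) x)\<^sup>2 \<le> (\<Sum>j<Suc i. (w (Suc j) x)\<^sup>2)"
      by (rule member_le_sum) auto
    also have "\<dots> \<le> b" using that unfolding good_def by blast
    finally show ?thesis by (simp add: real_le_rsqrt)
  qed
  have gle: "norm (f k x - f 0 x) \<le> real k * sqrt b" if gx: "good x" "x \<in> space M" for k x
  proof (induction k)
    case 0 then show ?case by simp
  next
    case (Suc k)
    have "norm (f (Suc k) x - f 0 x) \<le> norm (f k x - f 0 x) + norm (f (Suc k) x - f k x)"
      using norm_triangle_ineq[of "f k x - f 0 x" "f (Suc k) x - f k x"] by simp
    also have "norm (f (Suc k) x - f k x) \<le> w (Suc k) x"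
    proof -
      have "\<forall>j\<ge>1. norm (f j x - f (j - 1) x) \<le> w j x" using gx(1) unfolding good_def by blast
      from this[rule_format, of "Suc k"] show ?thesis by simp
    qed
    also have "\<dots> \<le> sqrt b" using wle[OF gx] .
    finally show ?case using Suc.IH by (simp add: algebra_simps)
  qed

  define l where "l = s / b"
  have l: "0 < l" using s b by (simp add: l_def)
  define Q where "Q k x = (\<Prod>i<k. cosh (l * w (Suc i) x))" for k x
  define G where "G k x = cosh (l * norm (f k x - f 0 x)) / Q k x" for k x
  have Q1: "1 \<le> Q k x" for k x unfolding Q_def by (rule prod_ge_1) (simp add: cosh_real_ge_1)
  have QF: "Q k \<in> borel_measurable (F k)" for k
    unfolding Q_def
  proof (rule borel_measurable_prod)
    fix i assume "i \<in> {..<k}"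
    then have [measurable]: "w (Suc i) \<in> borel_measurable (F k)" using wF by auto
    show "(\<lambda>x. cosh (l * w (Suc i) x)) \<in> borel_measurable (F k)" by measurable
  qed
  have GFk: "G k \<in> borel_measurable (F k)" for k
  proof -
    have [measurable]: "f k \<in> borel_measurable (F k)" "f 0 \<in> borel_measurable (F k)" "Q k \<in> borel_measurable (F k)"
      using fFk QF by auto
    show ?thesis unfolding G_def by measurable
  qed
  have GF: "G i \<in> borel_measurable (F k)" if "i \<le> k" for i k using meas_mono[OF NF that GFk] .
  have GM[measurable]: "G k \<in> borel_measurable M" for k using measurable_from_subalg[OF subF GFk] .
  have QM[measurable]: "Q k \<in> borel_measurable M" for k using measurable_from_subalg[OF subF QF] .
  have Gnn: "0 \<le> G k x" for k x unfolding G_def using Q1[of k x] by simp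
  have Gint: "integrable M (G k)" for k
  proof (rule integrable_const_bound[where B="cosh (l * (real k * sqrt b))"])
    show "AE x in M. norm (G k x) \<le> cosh (l * (real k * sqrt b))"
      using AEgood AE_space
    proof eventually_elim
      case (elim x)
      have "norm (G k x) = cosh (l * norm (f k x - f 0 x)) / Q k x" unfolding G_def using Q1[of k x] by simp
      also have "\<dots> \<le> cosh (l * norm (f k x - f 0 x))"
        using divide_left_mono[OF Q1[of k x] cosh_real_nonneg[of "l * norm (f k x - f 0 x)"]] Q1[of k x] by simp
      also have "\<dots> \<le> cosh (l * (real k * sqrt b))"
        using gle[OF elim] l by (intro cosh_mono_nonneg) auto
      finally show ?case .
    qed
  qed simp

  have step: "(\<integral>x. indicator A x * G (Suc m) x \<partial>M) \<le> (\<integral>x. indicator A x * G m x \<partial>M)"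
    if A: "A \<in> sets (F m)" for A m
  proof -
    define C where "C = l * sinh (l * (real m * sqrt b))"
    have C0: "0 \<le> C" unfolding C_def using l b by simp
    define V where "V x = (kap l (norm (f m x - f 0 x)) (w (Suc m) x) / (Q m x * cosh (l * w (Suc m) x))) *\<^sub>R (f m x - f 0 x)" for x
    define V' where "V' x = indicator A x *\<^sub>R (if norm (V x) \<le> C then V x else 0)" for x
    have AM: "A \<in> sets M" using A setsF by blast
    have V'F: "V' \<in> borel_measurable (F m)"
    proof -
      have [measurable]: "f m \<in> borel_measurable (F m)" "f 0 \<in> borel_measurable (F m)" "Q m \<in> borel_measurable (F m)"
        "w (Suc m) \<in> borel_measurable (F m)" "A \<in> sets (F m)"
        using fFk QF wm[of "Suc m"] A by auto
      show ?thesis unfolding V'_def V_def kap_def by measurable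
    qed
    have V'M[measurable]: "V' \<in> borel_measurable M" using measurable_from_subalg[OF subF V'F] .
    have V'b: "norm (V' x) \<le> C" for x using C0 by (simp add: V'_def indicator_def)
    define d where "d x = f (Suc m) x - f m x" for x
    have dint: "integrable M d" unfolding d_def using fint by auto
    have orth: "(\<integral>x. V' x \<bullet> d x \<partial>M) = 0"
      using orth_lemma[OF subF V'F _ dint, of C] V'b mart unfolding d_def by blast
    have int2: "integrable M (\<lambda>x. V' x \<bullet> d x)"
    proof (rule Bochner_Integration.integrable_bound[where f="\<lambda>x. C * norm (d x)"])
      show "integrable M (\<lambda>x. C * norm (d x))" using dint by auto
      show "(\<lambda>x. V' x \<bullet> d x) \<in> borel_measurable M" using dint by measurable
      show "AE x in M. norm (V' x \<bullet> d x) \<le> norm (C * norm (d x))"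
      proof (rule AE_I2)
        fix x
        have "norm (V' x \<bullet> d x) \<le> norm (V' x) * norm (d x)" using Cauchy_Schwarz_ineq2 by simp
        also have "\<dots> \<le> C * norm (d x)" using V'b[of x] by (intro mult_right_mono) auto
        finally show "norm (V' x \<bullet> d x) \<le> norm (C * norm (d x))" using C0 by simp
      qed
    qed
    have int1: "integrable M (\<lambda>x. indicator A x * G k x)" for k
      using integrable_mult_indicator[OF AM Gint[of k]] by simp
    have pw: "indicator A x * G (Suc m) x \<le> indicator A x * G m x + V' x \<bullet> d x"
      if gx: "good x" "x \<in> space M" for x
    proof (cases "x \<in> A")
      case False then show ?thesis by (simp add: V'_def)
    next
      case True
      define a where "a = norm (f m x - f 0 x)"
      define W where "W = w (Suc m) x"
      have W0: "0 \<le> W" using wnn[of "Suc m" x] gx unfolding W_def by simp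
      have dW: "norm (d x) \<le> W"
      proof -
        have "\<forall>j\<ge>1. norm (f j x - f (j - 1) x) \<le> w j x" using gx(1) unfolding good_def by blast
        from this[rule_format, of "Suc m"] show ?thesis unfolding d_def W_def by simp
      qed
      have Vb: "norm (V x) \<le> C"
      proof -
        have "norm (V x) = \<bar>kap l a W / (Q m x * cosh (l * W))\<bar> * a"
          unfolding V_def a_def W_def by simp
        also have "\<dots> \<le> C" unfolding C_def
          using Vbound[OF l _ W0 Q1[of m x], of a "real m * sqrt b"] gle[OF gx, of m] unfolding a_def by simp
        finally show ?thesis .
      qed
      have V'V: "V' x = V x" using True Vb by (simp add: V'_def)
      have QS: "Q (Suc m) x = Q m x * cosh (l * W)" unfolding Q_def W_def by simp
      have gS: "f (Suc m) x - f 0 x = (f m x - f 0 x) + d x" unfolding d_def by simp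
      have Qp: "0 < Q m x * cosh (l * W)" using Q1[of m x] by (simp add: add_pos_pos)
      have "G (Suc m) x = cosh (l * norm ((f m x - f 0 x) + d x)) / (Q m x * cosh (l * W))"
        unfolding G_def QS gS ..
      also have "\<dots> \<le> (cosh (l * a) * cosh (l * W) + kap l a W * ((f m x - f 0 x) \<bullet> d x)) / (Q m x * cosh (l * W))"
        using key_ineq[OF dW l, of "f m x - f 0 x"] Qp unfolding a_def by (intro divide_right_mono) auto
      also have "\<dots> = G m x + V x \<bullet> d x"
      proof -
        have e1: "V x \<bullet> d x = (kap l a W / (Q m x * cosh (l * W))) * ((f m x - f 0 x) \<bullet> d x)"
          unfolding V_def a_def W_def by (simp only: inner_scaleR_left)
        have e2: "G m x = cosh (l * a) / Q m x" unfolding G_def a_def ..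
        have e3: "(cA * cW + k * p) / (q * cW) = cA / q + k / (q * cW) * p"
          if "0 < q" "0 < cW" for cA cW k p q :: real
          using that by (simp add: field_simps)
        show ?thesis unfolding e1 e2 using Q1[of m x] by (intro e3) auto
      qed
      finally show ?thesis using True V'V by simp
    qed
    have "(\<integral>x. indicator A x * G (Suc m) x \<partial>M) \<le> (\<integral>x. indicator A x * G m x + V' x \<bullet> d x \<partial>M)"
    proof (intro integral_mono_AE Bochner_Integration.integrable_add int1 int2)
      show "AE x in M. indicator A x * G (Suc m) x \<le> indicator A x * G m x + V' x \<bullet> d x"
        using AEgood AE_space by eventually_elim (rule pw)
    qed
    also have "\<dots> = (\<integral>x. indicator A x * G m x \<partial>M) + (\<integral>x. V' x \<bullet> d x \<partial>M)"
      by (intro Bochner_Integration.integral_add int1 int2)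
    finally show ?thesis using orth by simp
  qed
  define c where "c = exp (s\<^sup>2 / (2 * b)) / 2"
  have c0: "0 < c" unfolding c_def by simp
  have G0: "G 0 x = 1" for x unfolding G_def Q_def by simp
  have int0: "(\<integral>x. G 0 x \<partial>M) = 1" unfolding G0 by (simp add: prob_space)
  have maxi: "c * measure M {x\<in>space M. \<exists>k\<le>n. c \<le> G k x} \<le> 1" for n
  proof -
    have "c * measure M {x\<in>space M. \<exists>k\<le>n. c \<le> G k x} \<le> (\<integral>x. G 0 x \<partial>M)"
    proof (rule maximal_ineq[OF P, of F])
      show "sets (F k) \<subseteq> sets M" for k by (rule setsF)
      show "space (F k) = space M" for k by (rule spF)
    qed (auto intro: GF Gint Gnn step c0)
    then show ?thesis using int0 by simp
  qed
  have Gbig: "c \<le> G k x" if gx: "good x" "x \<in> space M" and sk: "s < norm (f k x - f 0 x)" for k x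
  proof -
    have "exp (l * s) / 2 \<le> cosh (l * s)" by (simp add: cosh_def)
    also have "\<dots> \<le> cosh (l * norm (f k x - f 0 x))" using sk l s by (intro cosh_mono_nonneg) auto
    finally have cb: "exp (l * s) / 2 \<le> cosh (l * norm (f k x - f 0 x))" .
    have "Q k x \<le> (\<Prod>i<k. exp ((l * w (Suc i) x)\<^sup>2 / 2))"
      unfolding Q_def by (intro prod_mono) (auto intro: cosh_le_exp_sq)
    also have "\<dots> = exp (\<Sum>i<k. (l * w (Suc i) x)\<^sup>2 / 2)" by (simp add: exp_sum)
    also have "(\<Sum>i<k. (l * w (Suc i) x)\<^sup>2 / 2) = l\<^sup>2 / 2 * (\<Sum>i<k. (w (Suc i) x)\<^sup>2)"
      by (simp add: sum_distrib_left power_mult_distrib)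
    also have "\<dots> \<le> l\<^sup>2 / 2 * b" using gx(1) unfolding good_def by (intro mult_left_mono) auto
    finally have qb: "Q k x \<le> exp (l\<^sup>2 / 2 * b)" by simp
    have "c = exp (l * s) / 2 / exp (l\<^sup>2 / 2 * b)"
    proof -
      have "l * s - l\<^sup>2 / 2 * b = s\<^sup>2 / (2 * b)" unfolding l_def using b by (simp add: field_simps power2_eq_square)
      then show ?thesis unfolding c_def by (metis exp_diff diff_divide_eq_iff divide_divide_eq_left' mult.commute times_divide_eq_right)
    qed
    also have "\<dots> \<le> cosh (l * norm (f k x - f 0 x)) / Q k x"
      using cb qb Q1[of k x] by (intro frac_le) auto
    finally show ?thesis unfolding G_def .
  qed
  define E where "E n = {x\<in>space M. \<exists>k\<le>n. s < norm (f k x - f 0 x)}" for n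
  have EM: "E n \<in> sets M" for n unfolding E_def by measurable
  have En: "measure M (E n) \<le> 2 * exp (- (s\<^sup>2 / (2 * b)))" for n
  proof -
    have "measure M (E n) \<le> measure M {x\<in>space M. \<exists>k\<le>n. c \<le> G k x}"
    proof (rule finite_measure_mono_AE)
      show "{x\<in>space M. \<exists>k\<le>n. c \<le> G k x} \<in> sets M" by measurable
      show "AE x in M. x \<in> E n \<longrightarrow> x \<in> {x\<in>space M. \<exists>k\<le>n. c \<le> G k x}"
        using AEgood by eventually_elim (auto simp: E_def intro: Gbig)
    qed
    also have "\<dots> \<le> 1 / c" using maxi[of n] c0 by (simp add: field_simps)
    also have "1 / c = 2 * exp (- (s\<^sup>2 / (2 * b)))" unfolding c_def by (simp add: exp_minus field_simps)
    finally show ?thesis .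
  qed
  have "(\<lambda>n. measure M (E n)) \<longlonglongrightarrow> measure M (\<Union>n. E n)"
  proof (rule finite_Lim_measure_incseq)
    show "range E \<subseteq> sets M" using EM by auto
    show "incseq E" unfolding incseq_def E_def by (auto intro: order_trans)
  qed
  then have "measure M (\<Union>n. E n) \<le> 2 * exp (- (s\<^sup>2 / (2 * b)))"
    using En by (intro LIMSEQ_le_const2) auto
  moreover have "(\<Union>n. E n) = {x\<in>space M. \<exists>k. s < norm (f k x - f 0 x)}"
    unfolding E_def by auto
  ultimately show ?thesis by simp
qed


theorem theorem3p1:
  fixes M :: "'a measure" and F :: "nat \<Rightarrow> 'a measure"
    and f :: "nat \<Rightarrow> 'a \<Rightarrow> 'h::{real_inner, banach, second_countable_topology}"
    and w :: "nat \<Rightarrow> 'a \<Rightarrow> real" and b r :: real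
  assumes "prob_space M"
    and "nat_filtration M F"
    and "sets (F 0) = {{}, space M}"
    and "bmartingale M F f"
    and "\<And>j. j \<ge> 1 \<Longrightarrow> w j \<in> borel_measurable (F (j - 1))"
    and "\<And>j x. j \<ge> 1 \<Longrightarrow> x \<in> space M \<Longrightarrow> w j x \<ge> 0"
    and "\<And>j. j \<ge> 1 \<Longrightarrow> AE x in M. norm (f j x - f (j - 1) x) \<le> w j x"
    and "ereal b \<ge> esssup M (\<lambda>x. \<Sum>j. ereal ((w (Suc j) x)\<^sup>2))"
    and "r > 0"
  shows "measure M {x \<in> space M. (SUP j. ereal (norm (f j x - f 0 x))) \<ge> ereal r}
           \<le> 2 * exp (- (r\<^sup>2 / (2 * b)))"
proof -
  interpret prob_space M by fact
  define S where "S = {x \<in> space M. (SUP j. ereal (norm (f j x - f 0 x))) \<ge> ereal r}"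
  show ?thesis
  proof (cases "b \<le> 0")
    case True
    have "0 \<le> - (r\<^sup>2 / (2 * b))" using True by (simp add: divide_nonneg_nonpos)
    then have "1 \<le> exp (- (r\<^sup>2 / (2 * b)))" by simp
    moreover have "measure M S \<le> 1" by simp
    ultimately show ?thesis unfolding S_def by linarith
  next
    case False
    then have b: "0 < b" by simp
    have bnd: "measure M S \<le> 2 * exp (- (s\<^sup>2 / (2 * b)))" if s: "0 < s" "s < r" for s
    proof -
      define E where "E = {x\<in>space M. \<exists>k. s < norm (f k x - f 0 x)}"
      have EM: "E \<in> sets M" unfolding E_def
      proof -
        have [measurable]: "f k \<in> borel_measurable M" for k
          using assms(4) unfolding bmartingale_def by (meson borel_measurable_integrable)
        show "{x\<in>space M. \<exists>k. s < norm (f k x - f 0 x)} \<in> sets M" by measurable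
      qed
      have SE: "S \<subseteq> E"
      proof
        fix x assume "x \<in> S"
        then have x: "x \<in> space M" "ereal r \<le> (SUP j. ereal (norm (f j x - f 0 x)))" unfolding S_def by auto
        have "ereal s < ereal r" using s(2) by simp
        then have "ereal s < (SUP j. ereal (norm (f j x - f 0 x)))" using x(2) by (rule order_less_le_trans)
        then obtain j where "ereal s < ereal (norm (f j x - f 0 x))" by (auto simp: less_SUP_iff)
        then show "x \<in> E" using x unfolding E_def by auto
      qed
      have "measure M S \<le> measure M E"
      proof (cases "S \<in> sets M")
        case True then show ?thesis using SE EM by (intro finite_measure_mono) auto
      next
        case False then show ?thesis by (simp add: measure_notin_sets)
      qed
      also have "\<dots> \<le> 2 * exp (- (s\<^sup>2 / (2 * b)))"
        unfolding E_def using main_s[OF assms(1,2,4,5,6,7,8) b s(1)] .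
      finally show ?thesis .
    qed
    have ev: "\<forall>\<^sub>F s in at_left r. measure M S \<le> 2 * exp (- (s\<^sup>2 / (2 * b)))"
      using eventually_at_left_real[OF assms(9)] by eventually_elim (auto intro: bnd)
    have lim: "((\<lambda>s. 2 * exp (- (s\<^sup>2 / (2 * b)))) \<longlongrightarrow> 2 * exp (- (r\<^sup>2 / (2 * b)))) (at_left r)"
      using b by (intro tendsto_intros) auto
    have "measure M S \<le> 2 * exp (- (r\<^sup>2 / (2 * b)))"
      using tendsto_le[OF trivial_limit_at_left_real lim tendsto_const ev] .
    then show ?thesis unfolding S_def .
  qed
qed

end
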